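(* Let $H$ be a Hilbert space and consider the Cauchy problem $\dot{u}=A(t)u+F(t,u)$, $t\ge 0$, $u(0)=u_0$, for a function $u(t)$ with values in $H$, where $\dot u := \frac{du}{dt}$. Assume that $A(t)$ is a bounded linear operator in $H$ satisfying $\mathrm{Re}(A(t)u,u)\le -k\|u\|^2$ for all $u\in H$ and all $t\ge 0$, where $k>0$ is a constant, and that $F(t,u)$ is a nonlinear map in $H$ satisfying $\|F(t,u)\|\le c_0\|u\|^p$, where $c_0>0$ and $p>1$ are constants. Then the solution to this problem satisfies the estimate $\|u(t)\|=O(e^{-(k-\epsilon)t})$ as $t\to\infty$. Here $0<\epsilon<k$ can be chosen arbitrarily small if $\|u_0\|$ is sufficiently small.
   Context: Hilbert space $H$; $A(t)$ a bounded linear dissipative operator; the problem is $\dot{u}=A(t)u+F(t,u)+b(t)$, $u(0)=u_0$, with the persistently acting perturbation $b(t)=0$. *)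

theory Defs
  imports "HOL-Analysis.Analysis" "HOL-Library.Landau_Symbols"
begin

end

theory Submission
  imports Defs
begin

lemma deriv_h:
  fixes u :: "real \<Rightarrow> 'a::real_inner"
  assumes "(u has_vector_derivative d) (at s)"
  shows "((\<lambda>s. exp (c * s) * (inner (u s) (u s))) has_real_derivative
           exp (c * s) * (c * (inner (u s) (u s)) + 2 * (inner (d) (u s)))) (at s)"
proof -
  have 1: "(u has_derivative (\<lambda>h. h *\<^sub>R d)) (at s)" using assms by (simp add: has_vector_derivative_def)
  have "((\<lambda>s. inner (u s) (u s)) has_derivative (\<lambda>h. inner (u s) (h *\<^sub>R d) + inner (h *\<^sub>R d) (u s))) (at s)"
    by (rule has_derivative_inner[OF 1 1])
  then have 2: "((\<lambda>s. inner (u s) (u s)) has_real_derivative 2 * (inner (d) (u s))) (at s)"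
    unfolding has_field_derivative_def
    by (rule has_derivative_eq_rhs) (auto simp: inner_commute algebra_simps)
  show ?thesis
    by (rule derivative_eq_intros 2 | simp)+ (simp add: algebra_simps)
qed

theorem theorem3:
  fixes A :: "real \<Rightarrow> 'a::{real_inner, complete_space} \<Rightarrow> 'a"
    and F :: "real \<Rightarrow> 'a \<Rightarrow> 'a"
    and k c\<^sub>0 p :: real
  assumes A_lin: "\<And>t. t \<ge> 0 \<Longrightarrow> bounded_linear (A t)"
    and A_diss: "\<And>t v. t \<ge> 0 \<Longrightarrow> inner (A t v) v \<le> - k * (norm v)\<^sup>2"
    and k_pos: "k > 0"
    and F_bound: "\<And>t v. t \<ge> 0 \<Longrightarrow> norm (F t v) \<le> c\<^sub>0 * norm v powr p"
    and c0_pos: "c\<^sub>0 > 0"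
    and p_gt: "p > 1"
  shows "\<forall>\<epsilon>. 0 < \<epsilon> \<and> \<epsilon> < k \<longrightarrow>
           (\<exists>\<delta>>0. \<forall>u :: real \<Rightarrow> 'a.
              (\<forall>t\<ge>0. (u has_vector_derivative (A t (u t) + F t (u t))) (at t within {0..}))
              \<and> norm (u 0) < \<delta>
              \<longrightarrow> (\<lambda>t. norm (u t)) \<in> O(\<lambda>t. exp (- (k - \<epsilon>) * t)))"
proof (intro allI impI)
  fix \<epsilon> :: real
  assume eps: "0 < \<epsilon> \<and> \<epsilon> < k"
  define \<delta> where "\<delta> = (\<epsilon> / c\<^sub>0) powr (1 / (p - 1))"
  have dpos: "\<delta> > 0" using eps c0_pos unfolding \<delta>_def by simp
  have dpow: "\<delta> powr (p - 1) = \<epsilon> / c\<^sub>0"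
    unfolding \<delta>_def using eps c0_pos p_gt by (simp add: powr_powr)
  have key: "n powr p \<le> (\<epsilon> / c\<^sub>0) * n" if "0 \<le> n" "n \<le> \<delta>" for n :: real
  proof (cases "n = 0")
    case True then show ?thesis by simp
  next
    case False
    then have np: "n > 0" using that by simp
    have "n powr p = n powr ((p - 1) + 1)" by simp
    also have "\<dots> = n powr (p - 1) * n powr 1" by (rule powr_add)
    also have "\<dots> = n powr (p - 1) * n" using np by simp
    also have "\<dots> \<le> \<delta> powr (p - 1) * n"
      using np that p_gt by (intro mult_right_mono powr_mono2) auto
    finally show ?thesis using dpow by simp
  qed
  show "\<exists>\<delta>>0. \<forall>u :: real \<Rightarrow> 'a.
              (\<forall>t\<ge>0. (u has_vector_derivative (A t (u t) + F t (u t))) (at t within {0..}))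
              \<and> norm (u 0) < \<delta>
              \<longrightarrow> (\<lambda>t. norm (u t)) \<in> O(\<lambda>t. exp (- (k - \<epsilon>) * t))"
  proof (intro exI[of _ \<delta>] conjI allI impI)
    show "\<delta> > 0" by (fact dpos)
    fix u :: "real \<Rightarrow> 'a"
    assume U: "(\<forall>t\<ge>0. (u has_vector_derivative (A t (u t) + F t (u t))) (at t within {0..}))
              \<and> norm (u 0) < \<delta>"
    define D where "D t = A t (u t) + F t (u t)" for t
    define c where "c = 2 * (k - \<epsilon>)"
    define h where "h s = exp (c * s) * inner (u s) (u s)" for s
    have der: "(u has_vector_derivative D t) (at t within {0..})" if "t \<ge> 0" for t
      using U that unfolding D_def by blast
    have u0: "norm (u 0) < \<delta>" using U by blast
    have contu: "continuous_on {0..} u"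
      using der by (meson atLeast_iff continuous_on_eq_continuous_within has_vector_derivative_continuous)
    have derat: "(u has_vector_derivative D t) (at t)" if "t > 0" for t
    proof -
      have d0: "(u has_vector_derivative D t) (at t within {0..})" using der that by simp
      have "(u has_vector_derivative D t) (at t within {0<..})"
        by (rule has_vector_derivative_within_subset[OF d0]) auto
      moreover have "at t within {0<..} = at t"
        using that by (intro at_within_open) auto
      ultimately show ?thesis by simp
    qed
    have pt: "c * inner (u s) (u s) + 2 * inner (D s) (u s) \<le> 0"
      if "s \<ge> 0" "norm (u s) \<le> \<delta>" for s
    proof -
      let ?n = "norm (u s)"
      have i1: "inner (A s (u s)) (u s) \<le> - k * ?n^2" using A_diss that by blast
      have "inner (F s (u s)) (u s) \<le> norm (F s (u s)) * ?n" by (rule norm_cauchy_schwarz)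
      also have "\<dots> \<le> c\<^sub>0 * ?n powr p * ?n" using F_bound[OF that(1)] by (intro mult_right_mono) auto
      also have "\<dots> \<le> c\<^sub>0 * ((\<epsilon> / c\<^sub>0) * ?n) * ?n"
        using key[of ?n] that c0_pos by (intro mult_right_mono mult_left_mono) auto
      also have "\<dots> = \<epsilon> * ?n^2" using c0_pos by (simp add: power2_eq_square)
      finally have i2: "inner (F s (u s)) (u s) \<le> \<epsilon> * ?n^2" .
      have "inner (D s) (u s) = inner (A s (u s)) (u s) + inner (F s (u s)) (u s)"
        unfolding D_def by (simp add: inner_add_left)
      moreover have "inner (u s) (u s) = ?n^2" by (simp add: power2_norm_eq_inner)
      ultimately show ?thesis using i1 i2 unfolding c_def by (simp add: algebra_simps)
    qed
    have conth: "continuous_on {0..t} h" for t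
    proof -
      have "continuous_on {0..t} u" using contu by (rule continuous_on_subset) auto
      then show ?thesis unfolding h_def by (intro continuous_intros)
    qed
    have mono: "h t \<le> h 0" if "t \<ge> 0" "\<And>s. 0 < s \<Longrightarrow> s < t \<Longrightarrow> norm (u s) \<le> \<delta>" for t
    proof (rule DERIV_nonpos_imp_decreasing_open[OF that(1) _ conth])
      fix x assume x: "0 < x" "x < t"
        have "c * inner (u x) (u x) + 2 * inner (D x) (u x) \<le> 0"
          using pt[of x] x that(2)[OF x] by simp
        then have "exp (c * x) * (c * inner (u x) (u x) + 2 * inner (D x) (u x)) \<le> 0"
          by (intro mult_nonneg_nonpos) simp_all
        then show "\<exists>y. (h has_real_derivative y) (at x) \<and> y \<le> 0"
          unfolding h_def using deriv_h[OF derat[OF x(1)], of c] by blast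
    qed
    have small: "norm (u t) < \<delta>" if "t \<ge> 0" for t
    proof (rule ccontr)
      assume "\<not> norm (u t) < \<delta>"
      define S where "S = {0..} \<inter> (\<lambda>t. norm (u t)) -` {\<delta>..}"
      have tS: "t \<in> S" using that \<open>\<not> norm (u t) < \<delta>\<close> unfolding S_def by auto
      have "continuous_on {0..} (\<lambda>t. norm (u t))" using contu by (intro continuous_intros)
      then have "closed S" unfolding S_def by (intro continuous_closed_preimage) auto
      moreover have "bdd_below S" unfolding S_def by (rule bdd_belowI[of _ 0]) auto
      ultimately have mS: "Inf S \<in> S" using tS by (intro closed_contains_Inf) auto
      define m where "m = Inf S"
      have m0: "m \<ge> 0" and nm: "norm (u m) \<ge> \<delta>" using mS unfolding m_def S_def by auto
      have "norm (u s) \<le> \<delta>" if "0 < s" "s < m" for s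
      proof (rule ccontr)
        assume "\<not> norm (u s) \<le> \<delta>"
        then have "s \<in> S" using that unfolding S_def by auto
        then have "m \<le> s" unfolding m_def using \<open>bdd_below S\<close> by (rule cInf_lower)
        then show False using that by simp
      qed
      then have hm: "h m \<le> h 0" using mono m0 by blast
      have "h 0 = (norm (u 0))^2" unfolding h_def by (simp add: power2_norm_eq_inner)
      also have "\<dots> < \<delta>^2" using u0 by (simp add: power_strict_mono)
      also have "\<dots> \<le> (norm (u m))^2" using nm dpos by (simp add: power_mono)
      also have "\<dots> \<le> exp (c * m) * (norm (u m))^2"
      proof -
        have "c * m \<ge> 0" using eps m0 unfolding c_def by simp
        then have "exp (c * m) \<ge> 1" by simp
        then show ?thesis by (simp add: mult_le_cancel_right1)
      qed
      also have "\<dots> = h m" unfolding h_def by (simp add: power2_norm_eq_inner)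
      finally show False using hm by simp
    qed
    have bound: "norm (u t) \<le> norm (u 0) * exp (- (k - \<epsilon>) * t)" if "t \<ge> 0" for t
    proof -
      have "h t \<le> h 0" using mono[OF that] small by (simp add: less_imp_le)
      then have "exp (c * t) * (norm (u t))^2 \<le> (norm (u 0))^2"
        unfolding h_def by (simp add: power2_norm_eq_inner)
      then have "(norm (u t))^2 \<le> (norm (u 0))^2 * exp (- (c * t))"
        by (simp add: exp_minus field_simps)
      also have "exp (- (c * t)) = (exp (- (k - \<epsilon>) * t))^2"
        unfolding c_def power2_eq_square exp_add[symmetric] by (simp add: algebra_simps)
      finally have "(norm (u t))^2 \<le> (norm (u 0) * exp (- (k - \<epsilon>) * t))^2"
        by (simp add: power_mult_distrib)
      then show ?thesis by (rule power2_le_imp_le) simp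
    qed
    show "(\<lambda>t. norm (u t)) \<in> O(\<lambda>t. exp (- (k - \<epsilon>) * t))"
    proof (rule bigoI[of _ "norm (u 0)"])
      show "\<forall>\<^sub>F t in at_top. norm (norm (u t)) \<le> norm (u 0) * norm (exp (- (k - \<epsilon>) * t))"
        using eventually_ge_at_top[of "0::real"] by eventually_elim (use bound in \<open>simp del: mult_minus_left\<close>)
    qed
  qed
qed

end
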